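(* There is an evolution system $v^1_t=R^1$, $v^2_t=R^2$ (with $R^i$ depending on $v^1,v^2$ and finitely many of their $x$-derivatives) such that whenever $(v^1,v^2)$ satisfies it, the functions $$u^1=v^1_2+(v^1_1)^2+\bigl(v^2_1+v^1_1v^2-\mathrm{e}^{-3v^1}\bigr)^2,\qquad u^2=v^2_1+v^1_1v^2-\mathrm{e}^{-3v^1}$$ satisfy the Kersten–Krasilshchik system $$u^1_t=-u^1_3+6u^1u^1_1-3u^2u^2_3-3u^2_1u^2_2+3u^1_1(u^2)^2+6u^1u^2u^2_1,\qquad u^2_t=-u^2_3+3(u^2)^2u^2_1+3u^1u^2_1+3u^1_1u^2.$$
   Context: $u^i_j=\partial^ju^i/\partial x^j$, $v^i_j=\partial^jv^i/\partial x^j$. Complex-analytic, local considerations. *)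

theory Defs
  imports "HOL-Analysis.Analysis"
begin

text \<open>Functions of two complex variables (x,t), complex-analytic on an open set S:
  jointly continuous and holomorphic in each variable separately (Osgood).\<close>
definition analytic2 :: "(complex \<times> complex) set \<Rightarrow> (complex \<Rightarrow> complex \<Rightarrow> complex) \<Rightarrow> bool" where
  "analytic2 S f \<longleftrightarrow> open S \<and> continuous_on S (\<lambda>p. f (fst p) (snd p)) \<and>
     (\<forall>t. (\<lambda>x. f x t) holomorphic_on {x. (x, t) \<in> S}) \<and>
     (\<forall>x. (\<lambda>t. f x t) holomorphic_on {t. (x, t) \<in> S})"

definition Dx :: "nat \<Rightarrow> (complex \<Rightarrow> complex \<Rightarrow> complex) \<Rightarrow> complex \<Rightarrow> complex \<Rightarrow> complex" where
  "Dx k f x t = (deriv ^^ k) (\<lambda>y. f y t) x"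

definition Dt :: "(complex \<Rightarrow> complex \<Rightarrow> complex) \<Rightarrow> complex \<Rightarrow> complex \<Rightarrow> complex" where
  "Dt f x t = deriv (\<lambda>s. f x s) t"

definition jet :: "(complex \<Rightarrow> complex \<Rightarrow> complex) \<Rightarrow> complex \<Rightarrow> complex \<Rightarrow> nat \<Rightarrow> complex" where
  "jet f x t = (\<lambda>k. Dx k f x t)"

definition jet_function :: "nat \<Rightarrow> ((nat \<Rightarrow> complex) \<Rightarrow> (nat \<Rightarrow> complex) \<Rightarrow> complex) \<Rightarrow> bool" where
  "jet_function N R \<longleftrightarrow>
     (\<forall>a b a' b'. (\<forall>k\<le>N. a k = a' k \<and> b k = b' k) \<longrightarrow> R a b = R a' b') \<and>
     continuous_on UNIV (\<lambda>p. R (fst p) (snd p)) \<and>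
     (\<forall>k a b. (\<lambda>z. R (a(k := z)) b) holomorphic_on UNIV) \<and>
     (\<forall>k a b. (\<lambda>z. R a (b(k := z))) holomorphic_on UNIV)"

end

theory Submission
  imports Defs "HOL-Complex_Analysis.Complex_Analysis"
begin


datatype ex = Va nat | Vb nat | Ve | Da nat | Db nat | Cst int | Ad ex ex | Mu ex ex

primrec ev :: "(nat \<Rightarrow> complex) \<Rightarrow> (nat \<Rightarrow> complex) \<Rightarrow> (nat \<Rightarrow> complex) \<Rightarrow> (nat \<Rightarrow> complex) \<Rightarrow> ex \<Rightarrow> complex" where
  "ev a b da db (Va j) = a j"
| "ev a b da db (Vb j) = b j"
| "ev a b da db Ve = exp (- 3 * a 0)"
| "ev a b da db (Da j) = da j"
| "ev a b da db (Db j) = db j"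
| "ev a b da db (Cst c) = of_int c"
| "ev a b da db (Ad p q) = ev a b da db p + ev a b da db q"
| "ev a b da db (Mu p q) = ev a b da db p * ev a b da db q"

primrec nod :: "ex \<Rightarrow> bool" where
  "nod (Va j) = True" | "nod (Vb j) = True" | "nod Ve = True" | "nod (Da j) = False"
| "nod (Db j) = False" | "nod (Cst c) = True" | "nod (Ad p q) = (nod p \<and> nod q)"
| "nod (Mu p q) = (nod p \<and> nod q)"

primrec dv :: "ex \<Rightarrow> ex" where
  "dv (Va j) = Da j" | "dv (Vb j) = Db j" | "dv Ve = Mu (Cst (-3)) (Mu (Da 0) Ve)"
| "dv (Da j) = Cst 0" | "dv (Db j) = Cst 0" | "dv (Cst c) = Cst 0"
| "dv (Ad p q) = Ad (dv p) (dv q)" | "dv (Mu p q) = Ad (Mu (dv p) q) (Mu p (dv q))"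

primrec sb :: "(nat \<Rightarrow> ex) \<Rightarrow> (nat \<Rightarrow> ex) \<Rightarrow> ex \<Rightarrow> ex" where
  "sb f g (Va j) = Va j" | "sb f g (Vb j) = Vb j" | "sb f g Ve = Ve"
| "sb f g (Da j) = f j" | "sb f g (Db j) = g j" | "sb f g (Cst c) = Cst c"
| "sb f g (Ad p q) = Ad (sb f g p) (sb f g q)" | "sb f g (Mu p q) = Mu (sb f g p) (sb f g q)"

definition td :: "ex \<Rightarrow> ex" where
  "td e = sb (\<lambda>j. Va (Suc j)) (\<lambda>j. Vb (Suc j)) (dv e)"

lemma ev_nod: "nod e \<Longrightarrow> ev a b da db e = ev a b da' db' e"
  by (induction e) auto

lemma ev_sb: "ev a b da db (sb f g e) = ev a b (\<lambda>j. ev a b da db (f j)) (\<lambda>j. ev a b da db (g j)) e"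
  by (induction e) auto

lemma nod_sb: "(\<And>j. nod (f j)) \<Longrightarrow> (\<And>j. nod (g j)) \<Longrightarrow> nod (sb f g e)"
  by (induction e) auto

lemma nod_td: "nod (td e)"
  unfolding td_def by (rule nod_sb) auto

lemma nod_td_pow: "nod e \<Longrightarrow> nod ((td ^^ k) e)"
  by (cases k) (auto simp: nod_td simp del: funpow.simps simp add: funpow_Suc_right[symmetric] funpow.simps(2))

lemma ev_dv_deriv:
  assumes "nod e"
    and da: "\<And>j. ((\<lambda>s. a s j) has_field_derivative da j) (at s0)"
    and db: "\<And>j. ((\<lambda>s. b s j) has_field_derivative db j) (at s0)"
  shows "((\<lambda>s. ev (a s) (b s) z z e) has_field_derivative ev (a s0) (b s0) da db (dv e)) (at s0)"
  using assms(1)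
proof (induction e)
  case Ve
  show ?case using da[of 0]
    by (auto intro!: derivative_eq_intros)
next
  case (Ad p q)
  then show ?case
    by (auto intro!: derivative_eq_intros simp: ev_nod[where da=z and db=z and da'=da and db'=db])
next
  case (Mu p q)
  then show ?case
    by (auto intro!: derivative_eq_intros simp: ev_nod[where da=z and db=z and da'=da and db'=db])
qed (auto intro!: derivative_eq_intros da db)

definition eR1 :: ex where "eR1 = Ad (Mu (Ve) (Mu (Va 1) (Mu (Vb 1) (Cst (-12))))) (Ad (Mu (Ve) (Mu (Va 1) (Mu (Va 1) (Mu (Vb 0) (Cst (-15)))))) (Ad (Mu (Ve) (Mu (Va 2) (Mu (Vb 0) (Cst (3))))) (Ad (Mu (Ve) (Mu (Vb 2) (Cst (3)))) (Ad (Mu (Ve) (Mu (Ve) (Mu (Va 1) (Cst (12))))) (Ad (Mu (Va 1) (Mu (Va 2) (Mu (Vb 0) (Mu (Vb 0) (Cst (-3)))))) (Ad (Mu (Va 1) (Mu (Vb 0) (Mu (Vb 2) (Cst (-3))))) (Ad (Mu (Va 1) (Mu (Va 1) (Mu (Vb 0) (Mu (Vb 1) (Cst (3)))))) (Ad (Mu (Va 1) (Mu (Va 1) (Mu (Va 1) (Cst (2))))) (Ad (Mu (Va 1) (Mu (Va 1) (Mu (Va 1) (Mu (Vb 0) (Mu (Vb 0) (Cst (3))))))) (Ad (Mu (Va 2) (Mu (Vb 0) (Mu (Vb 1) (Cst (-3))))) (Ad (Mu (Va 3) (Cst (-1))) (Mu (Vb 1) (Mu (Vb 2) (Cst (-3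)))))))))))))))"

definition eR2 :: ex where "eR2 = Ad (Mu (Ve) (Mu (Va 1) (Mu (Va 1) (Cst (12))))) (Ad (Mu (Ve) (Mu (Va 1) (Mu (Va 1) (Mu (Vb 0) (Mu (Vb 0) (Cst (9))))))) (Ad (Mu (Ve) (Mu (Va 2) (Cst (-3)))) (Ad (Mu (Ve) (Mu (Va 2) (Mu (Vb 0) (Mu (Vb 0) (Cst (-3)))))) (Ad (Mu (Ve) (Mu (Vb 0) (Mu (Vb 2) (Cst (-3))))) (Ad (Mu (Ve) (Mu (Vb 1) (Mu (Vb 1) (Cst (-6))))) (Ad (Mu (Ve) (Mu (Ve) (Mu (Va 1) (Mu (Vb 0) (Cst (-9)))))) (Ad (Mu (Ve) (Mu (Ve) (Mu (Vb 1) (Cst (3))))) (Ad (Mu (Va 1) (Mu (Va 2) (Mu (Vb 0) (Cst (3))))) (Ad (Mu (Va 1) (Mu (Va 2) (Mu (Vb 0) (Mu (Vb 0) (Mu (Vb 0) (Cst (3))))))) (Ad (Mu (Va 1) (Mu (Vb 0) (Mu (Vb 1) (Mu (Vb 1) (Cst (9)))))) (Ad (Mu (Va 1) (Mu (Vb 0) (Mu (Vb 0) (Mu (Vb 2) (Cst (3)))))) (Ad (Mu (Va 1) (Mu (Va 1) (Mu (Vb 0) (Mu (Vb 0) (Mu (Vb 1) (Cst (6))))))) (Ad (Mu (Va 1) (Mu (Va 1) (Mu (Vb 1) (Cst (3))))) (Ad (Mu (Va 2) (Mu (Vb 0) (Mu (Vb 0) (Mu (Vb 1) (Cst (3))))))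 (Ad (Mu (Vb 0) (Mu (Vb 1) (Mu (Vb 2) (Cst (3))))) (Ad (Mu (Vb 1) (Mu (Vb 1) (Mu (Vb 1) (Cst (3))))) (Mu (Vb 3) (Cst (-1)))))))))))))))))))"

definition eu2 :: ex where "eu2 = Ad (Ad (Vb 1) (Mu (Va 1) (Vb 0))) (Mu (Cst (-1)) Ve)"

definition eu1 :: ex where "eu1 = Ad (Ad (Va 2) (Mu (Va 1) (Va 1))) (Mu eu2 eu2)"


abbreviation "z0 \<equiv> (\<lambda>_::nat. 0::complex)"

lemma final1: "ev A B z0 z0 (sb (\<lambda>j. (td ^^ j) eR1) (\<lambda>j. (td ^^ j) eR2) (dv eu1)) =
   - ev A B z0 z0 ((td^^3) eu1) + 6 * ev A B z0 z0 eu1 * ev A B z0 z0 ((td^^1) eu1)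
   - 3 * ev A B z0 z0 eu2 * ev A B z0 z0 ((td^^3) eu2) - 3 * ev A B z0 z0 ((td^^1) eu2) * ev A B z0 z0 ((td^^2) eu2)
   + 3 * ev A B z0 z0 ((td^^1) eu1) * (ev A B z0 z0 eu2)^2 + 6 * ev A B z0 z0 eu1 * ev A B z0 z0 eu2 * ev A B z0 z0 ((td^^1) eu2)"
  unfolding eR1_def eR2_def eu1_def eu2_def
  apply (simp add: td_def numeral_eq_Suc)
  by algebra


lemma final2: "ev A B z0 z0 (sb (\<lambda>j. (td ^^ j) eR1) (\<lambda>j. (td ^^ j) eR2) (dv eu2)) =
   - ev A B z0 z0 ((td^^3) eu2) + 3 * (ev A B z0 z0 eu2)^2 * ev A B z0 z0 ((td^^1) eu2)
   + 3 * ev A B z0 z0 eu1 * ev A B z0 z0 ((td^^1) eu2) + 3 * ev A B z0 z0 ((td^^1) eu1) * ev A B z0 z0 eu2"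
  unfolding eR1_def eR2_def eu1_def eu2_def
  apply (simp add: td_def numeral_eq_Suc)
  by algebra


lemma open_slice1: "open (S::(complex*complex) set) \<Longrightarrow> open {y. (y, t) \<in> S}"
proof -
  assume "open S"
  have "{y. (y, t) \<in> S} = (\<lambda>y. (y, t)) -` S" by auto
  moreover have "open ((\<lambda>y. (y, t)) -` S)"
    by (rule continuous_open_vimage[OF \<open>open S\<close>]) (auto intro!: continuous_intros)
  ultimately show ?thesis by simp
qed

lemma open_slice2: "open (S::(complex*complex) set) \<Longrightarrow> open {t. (x, t) \<in> S}"
proof -
  assume "open S"
  have "{t. (x, t) \<in> S} = (\<lambda>t. (x, t)) -` S" by auto
  moreover have "open ((\<lambda>t. (x, t)) -` S)"
    by (rule continuous_open_vimage[OF \<open>open S\<close>]) (auto intro!: continuous_intros)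
  ultimately show ?thesis by simp
qed

lemma box_in_ball:
  fixes x0 t0 :: complex
  assumes "e > 0" "ball (x0, t0) e \<subseteq> S" "x \<in> cball x0 (e/2)" "s \<in> cball t0 (e/2)"
  shows "(x, s) \<in> S"
proof -
  have d1: "dist x0 x \<le> e/2" and d2: "dist t0 s \<le> e/2" using assms by auto
  have "(dist x0 x)^2 + (dist t0 s)^2 \<le> (e/2)^2 + (e/2)^2"
    by (intro add_mono power_mono d1 d2) auto
  also have "\<dots> < e^2" using assms(1) by (simp add: power2_eq_square field_simps)
  finally have "sqrt ((dist x0 x)^2 + (dist t0 s)^2) < sqrt (e^2)"
    using real_sqrt_less_mono by blast
  then have "sqrt ((dist x0 x)^2 + (dist t0 s)^2) < e"
    using assms(1) by simp
  then have "dist (x0, t0) (x, s) < e" by (simp add: dist_Pair_Pair)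
  then show ?thesis using assms(2) by auto
qed


lemma taylor_bound:
  fixes \<phi> :: "complex \<Rightarrow> complex" and t0 h :: complex
  assumes T: "open T" and hol: "\<phi> holomorphic_on T" and r: "r > 0" and sub: "cball t0 r \<subseteq> T"
    and M: "\<And>s. s \<in> cball t0 r \<Longrightarrow> norm (\<phi> s) \<le> M"
    and h: "norm h < r/2"
  shows "norm (\<phi> (t0 + h) - \<phi> t0 - deriv \<phi> t0 * h) \<le> (8 * M / r^2) * norm h ^ 2"
proof -
  let ?S = "ball t0 (r/2)"
  have Ssub: "?S \<subseteq> T" 
  proof -
    have "ball t0 (r/2) \<subseteq> cball t0 r" using r by (auto simp: subset_eq)
    then show ?thesis using sub by blast
  qed
  have der: "((deriv ^^ i) \<phi> has_field_derivative (deriv ^^ Suc i) \<phi> s) (at s within ?S)"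
    if "s \<in> ?S" for i s
  proof -
    have "(deriv ^^ i) \<phi> holomorphic_on T" by (rule holomorphic_higher_deriv[OF hol T])
    from holomorphic_derivI[OF this T, of s ?S] that Ssub show ?thesis by auto
  qed
  have bnd: "norm ((deriv ^^ Suc 1) \<phi> s) \<le> 8 * M / r^2" if s: "s \<in> ?S" for s
  proof -
    have cb: "cball s (r/2) \<subseteq> cball t0 r"
    proof
      fix y assume y: "y \<in> cball s (r/2)"
      have "dist t0 y \<le> dist t0 s + dist s y" by (rule dist_triangle)
      moreover have "dist t0 s < r/2" using s by simp
      moreover have "dist s y \<le> r/2" using y by simp
      ultimately show "y \<in> cball t0 r" by simp
    qed
    have "norm ((deriv ^^ 2) \<phi> s) \<le> fact 2 * M / (r/2)^2"
    proof (rule Cauchy_inequality)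
      show "\<phi> holomorphic_on ball s (r/2)"
        using hol cb sub by (meson ball_subset_cball holomorphic_on_subset order_trans)
      show "continuous_on (cball s (r/2)) \<phi>"
        using holomorphic_on_imp_continuous_on[OF hol] cb sub by (meson continuous_on_subset order_trans)
      show "0 < r/2" using r by simp
      show "norm (\<phi> x) \<le> M" if "norm (s - x) = r/2" for x
        using M[of x] that cb by (auto simp: dist_norm)
    qed
    also have "\<dots> = 8 * M / r^2" by (simp add: power2_eq_square field_simps)
    finally show ?thesis by (simp add: numeral_2_eq_2)
  qed
  have t0S: "t0 \<in> ?S" using r by simp
  have hS: "t0 + h \<in> ?S" using h by (simp add: dist_norm)
  have "norm ((deriv ^^ 0) \<phi> (t0 + h) - (\<Sum>i\<le>1. (deriv ^^ i) \<phi> t0 * (t0 + h - t0) ^ i / fact i))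
        \<le> (8 * M / r^2) * norm (t0 + h - t0) ^ Suc 1 / fact 1"
    by (rule complex_Taylor[where S="?S" and n=1 and f="\<lambda>i. (deriv ^^ i) \<phi>", OF convex_ball der bnd t0S hS])
  then show ?thesis by (simp add: numeral_2_eq_2 algebra_simps)
qed

lemma commute:
  fixes f :: "complex \<Rightarrow> complex \<Rightarrow> complex"
  assumes an: "analytic2 S f" and p: "(x0, t0) \<in> S"
  shows "((\<lambda>s. (deriv ^^ k) (\<lambda>y. f y s) x0) has_field_derivative
            (deriv ^^ k) (\<lambda>y. deriv (\<lambda>s. f y s) t0) x0) (at t0)"
proof -
  have oS: "open S" and cont: "continuous_on S (\<lambda>p. f (fst p) (snd p))"
    and hx: "\<And>t. (\<lambda>x. f x t) holomorphic_on {x. (x, t) \<in> S}"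
    and ht: "\<And>x. (\<lambda>t. f x t) holomorphic_on {t. (x, t) \<in> S}"
    using an unfolding analytic2_def by auto
  obtain e where e: "e > 0" "ball (x0, t0) e \<subseteq> S" using oS p open_contains_ball by blast
  define r where "r = e/2"
  have r: "r > 0" using e by (simp add: r_def)
  have box: "(x, s) \<in> S" if "x \<in> cball x0 r" "s \<in> cball t0 r" for x s
    using box_in_ball[OF e] that by (simp add: r_def)
  let ?K = "cball x0 r \<times> cball t0 r"
  have "compact ?K" by (simp add: compact_Times)
  moreover have "continuous_on ?K (\<lambda>p. f (fst p) (snd p))"
    by (rule continuous_on_subset[OF cont]) (auto intro: box)
  ultimately have "compact ((\<lambda>p. f (fst p) (snd p)) ` ?K)" by (meson compact_continuous_image)
  then have "bounded ((\<lambda>p. f (fst p) (snd p)) ` ?K)" by (rule compact_imp_bounded)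
  then obtain M where M0: "\<forall>y\<in>(\<lambda>p. f (fst p) (snd p)) ` ?K. norm y \<le> M"
    unfolding bounded_iff by blast
  have M: "norm (f (fst p) (snd p)) \<le> M" if "p \<in> ?K" for p
    using M0 that by blast
  define B where "B = 8 * M / r^2"
  have tb: "norm (f x (t0 + h) - f x t0 - deriv (\<lambda>s. f x s) t0 * h) \<le> B * norm h ^ 2"
    if x: "x \<in> cball x0 r" and h: "norm h < r/2" for x h
    unfolding B_def
  proof (rule taylor_bound[where T="{t. (x, t) \<in> S}"])
    show "open {t. (x, t) \<in> S}" by (rule open_slice2[OF oS])
    show "(\<lambda>t. f x t) holomorphic_on {t. (x, t) \<in> S}" by (rule ht)
    show "cball t0 r \<subseteq> {t. (x, t) \<in> S}" using box x by auto
    show "norm (f x s) \<le> M" if "s \<in> cball t0 r" for s using M[of "(x, s)"] x that by auto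
  qed (use r h in auto)
  define q where "q = (\<lambda>h x. inverse h * (f x (t0 + h) - f x t0))"
  define g where "g = (\<lambda>y. deriv (\<lambda>s. f y s) t0)"
  have ulim: "uniform_limit (ball x0 r) q g (at 0)"
    unfolding uniform_limit_iff
  proof (intro allI impI)
    fix \<epsilon> :: real assume \<epsilon>: "\<epsilon> > 0"
    define d where "d = min (r/2) (\<epsilon> / (\<bar>B\<bar> + 1))"
    have d: "d > 0" using r \<epsilon> by (simp add: d_def)
    have key: "\<forall>x\<in>ball x0 r. dist (q h x) (g x) < \<epsilon>" if h: "h \<noteq> 0" "norm h < d" for h
    proof
      fix x assume x: "x \<in> ball x0 r"
      have "q h x - g x = inverse h * (f x (t0 + h) - f x t0 - deriv (\<lambda>s. f x s) t0 * h)"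
        using h by (simp add: q_def g_def field_simps)
      then have "dist (q h x) (g x) = norm (f x (t0 + h) - f x t0 - deriv (\<lambda>s. f x s) t0 * h) / norm h"
        by (simp add: dist_norm norm_mult norm_inverse divide_inverse mult.commute)
      also have "\<dots> \<le> B * norm h ^ 2 / norm h"
        by (intro divide_right_mono tb) (use x h in \<open>auto simp: d_def\<close>)
      also have "\<dots> = B * norm h" using h by (simp add: power2_eq_square)
      also have "\<dots> \<le> \<bar>B\<bar> * norm h" by (simp add: mult_right_mono)
      also have "\<dots> \<le> \<bar>B\<bar> * (\<epsilon> / (\<bar>B\<bar> + 1))"
      proof -
        have "norm h \<le> \<epsilon> / (\<bar>B\<bar> + 1)" using h by (simp add: d_def)
        then show ?thesis by (intro mult_left_mono) auto
      qed
      also have "\<dots> < \<epsilon>"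
      proof -
        have "\<bar>B\<bar> * \<epsilon> < (\<bar>B\<bar> + 1) * \<epsilon>" using \<epsilon> by simp
        then show ?thesis by (simp add: pos_divide_less_eq add_pos_nonneg mult.commute)
      qed
      finally show "dist (q h x) (g x) < \<epsilon>" .
    qed
    then show "\<forall>\<^sub>F h in at 0. \<forall>x\<in>ball x0 r. dist (q h x) (g x) < \<epsilon>"
      unfolding eventually_at using d key by (intro exI[of _ d]) (simp add: dist_norm)
  qed
  have hol_slice: "(\<lambda>x. f x s) holomorphic_on ball x0 r" if "s \<in> cball t0 r" for s
    by (rule holomorphic_on_subset[OF hx]) (use box that in auto)
  have fholo: "\<forall>\<^sub>F h in at 0. q h holomorphic_on ball x0 r"
  proof -
    have "q h holomorphic_on ball x0 r" if "norm h < r" for h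
      unfolding q_def using that r
      by (intro holomorphic_intros hol_slice) (auto simp: dist_norm)
    then show ?thesis unfolding eventually_at using r by (intro exI[of _ r]) (simp add: dist_norm)
  qed
  have lim: "((\<lambda>h. (deriv ^^ k) (q h) x0) \<longlongrightarrow> (deriv ^^ k) g x0) (at 0)"
    by (rule higher_deriv_complex_uniform_limit[OF ulim fholo]) (use r in auto)
  have eq: "(deriv ^^ k) (q h) x0 = ((deriv ^^ k) (\<lambda>y. f y (t0 + h)) x0 - (deriv ^^ k) (\<lambda>y. f y t0) x0) / h"
    if "norm h < r" for h
  proof -
    have h1: "(\<lambda>y. f y (t0 + h)) holomorphic_on ball x0 r" using that by (intro hol_slice) (auto simp: dist_norm)
    have h0: "(\<lambda>y. f y t0) holomorphic_on ball x0 r" using r by (intro hol_slice) auto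
    have "(deriv ^^ k) (q h) x0 = inverse h * (deriv ^^ k) (\<lambda>y. f y (t0 + h) - f y t0) x0"
      unfolding q_def by (rule higher_deriv_cmult[where A="ball x0 r"]) (use h1 h0 r in \<open>auto intro!: holomorphic_intros\<close>)
    also have "(deriv ^^ k) (\<lambda>y. f y (t0 + h) - f y t0) x0 = (deriv ^^ k) (\<lambda>y. f y (t0 + h)) x0 - (deriv ^^ k) (\<lambda>y. f y t0) x0"
      by (rule higher_deriv_diff[OF h1 h0]) (use r in auto)
    finally show ?thesis by (simp add: divide_inverse mult.commute)
  qed
  have "((\<lambda>h. ((deriv ^^ k) (\<lambda>y. f y (t0 + h)) x0 - (deriv ^^ k) (\<lambda>y. f y t0) x0) / h) \<longlongrightarrow> (deriv ^^ k) g x0) (at 0)"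
  proof (rule Lim_transform_eventually[OF lim])
    show "\<forall>\<^sub>F h in at 0. (deriv ^^ k) (q h) x0 = ((deriv ^^ k) (\<lambda>y. f y (t0 + h)) x0 - (deriv ^^ k) (\<lambda>y. f y t0) x0) / h"
      unfolding eventually_at using r eq by (intro exI[of _ r]) (simp add: dist_norm)
  qed
  then show ?thesis unfolding DERIV_def g_def by simp
qed


primrec bnd :: "nat \<Rightarrow> ex \<Rightarrow> bool" where
  "bnd N (Va j) = (j \<le> N)" | "bnd N (Vb j) = (j \<le> N)" | "bnd N Ve = True" | "bnd N (Da j) = True"
| "bnd N (Db j) = True" | "bnd N (Cst c) = True" | "bnd N (Ad p q) = (bnd N p \<and> bnd N q)"
| "bnd N (Mu p q) = (bnd N p \<and> bnd N q)"

lemma ev_local: "(\<forall>k\<le>N. a k = a' k \<and> b k = b' k) \<Longrightarrow> bnd N e \<Longrightarrow> ev a b da db e = ev a' b' da db e"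
  by (induction e) auto

lemma ev_cont: "nod e \<Longrightarrow> continuous_on UNIV (\<lambda>p. ev (fst p) (snd p) da db e)"
proof (induction e)
  case (Va j)
  show ?case by simp (intro continuous_on_compose2[OF continuous_on_product_coordinates continuous_on_fst], auto)
next
  case (Vb j)
  show ?case by simp (intro continuous_on_compose2[OF continuous_on_product_coordinates continuous_on_snd], auto)
next
  case Ve
  have "continuous_on UNIV (\<lambda>p::(nat \<Rightarrow> complex) \<times> (nat \<Rightarrow> complex). fst p 0)"
    by (intro continuous_on_compose2[OF continuous_on_product_coordinates continuous_on_fst]) auto
  then show ?case by (simp add: continuous_intros)
qed (auto intro!: continuous_intros)

lemma ev_hol_a: "nod e \<Longrightarrow> (\<lambda>w. ev (a(k := w)) b da db e) holomorphic_on UNIV"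
proof (induction e)
  case (Va j)
  show ?case by (cases "j = k") (auto intro!: holomorphic_intros)
next
  case Ve
  show ?case by (cases "0 = k") (auto intro!: holomorphic_intros)
qed (auto intro!: holomorphic_intros)

lemma ev_hol_b: "nod e \<Longrightarrow> (\<lambda>w. ev a (b(k := w)) da db e) holomorphic_on UNIV"
proof (induction e)
  case (Vb j)
  show ?case by (cases "j = k") (auto intro!: holomorphic_intros)
qed (auto intro!: holomorphic_intros)

lemma jet_fun_ev: "nod e \<Longrightarrow> bnd N e \<Longrightarrow> jet_function N (\<lambda>a b. ev a b z0 z0 e)"
  unfolding jet_function_def
proof (intro conjI allI impI)
  fix a b a' b' :: "nat \<Rightarrow> complex"
  assume "\<forall>k\<le>N. a k = a' k \<and> b k = b' k" "bnd N e"
  then show "ev a b z0 z0 e = ev a' b' z0 z0 e" by (rule ev_local)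
next
  assume "nod e" then show "continuous_on UNIV (\<lambda>p. ev (fst p) (snd p) z0 z0 e)" by (rule ev_cont)
next
  fix k a b assume "nod e" then show "(\<lambda>w. ev (a(k := w)) b z0 z0 e) holomorphic_on UNIV" by (rule ev_hol_a)
next
  fix k a b assume "nod e" then show "(\<lambda>w. ev a (b(k := w)) z0 z0 e) holomorphic_on UNIV" by (rule ev_hol_b)
qed

lemma ev_td_pow:
  assumes hF: "F holomorphic_on U" and hG: "G holomorphic_on U" and U: "open U" and e: "nod e"
  shows "y \<in> U \<Longrightarrow> (deriv ^^ k) (\<lambda>y. ev (\<lambda>j. (deriv ^^ j) F y) (\<lambda>j. (deriv ^^ j) G y) z0 z0 e) y
           = ev (\<lambda>j. (deriv ^^ j) F y) (\<lambda>j. (deriv ^^ j) G y) z0 z0 ((td ^^ k) e)"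
proof (induction k arbitrary: y)
  case 0
  then show ?case by simp
next
  case (Suc k)
  let ?H = "\<lambda>y. ev (\<lambda>j. (deriv ^^ j) F y) (\<lambda>j. (deriv ^^ j) G y) z0 z0 e"
  let ?K = "\<lambda>y. ev (\<lambda>j. (deriv ^^ j) F y) (\<lambda>j. (deriv ^^ j) G y) z0 z0 ((td ^^ k) e)"
  have "(deriv ^^ Suc k) ?H y = deriv ((deriv ^^ k) ?H) y" by simp
  also have "\<dots> = deriv ?K y"
    by (rule deriv_cong_ev[OF eventually_mono[OF eventually_nhds_in_open[OF U Suc.prems]]]) (use Suc.IH in auto)
  also have "\<dots> = ev (\<lambda>j. (deriv ^^ j) F y) (\<lambda>j. (deriv ^^ j) G y)
                     (\<lambda>j. (deriv ^^ Suc j) F y) (\<lambda>j. (deriv ^^ Suc j) G y) (dv ((td ^^ k) e))"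
  proof (rule DERIV_imp_deriv, rule ev_dv_deriv)
    show "nod ((td ^^ k) e)" by (rule nod_td_pow[OF e])
    show "((\<lambda>s. (deriv ^^ j) F s) has_field_derivative (deriv ^^ Suc j) F y) (at y)" for j
      using holomorphic_derivI[OF holomorphic_higher_deriv[OF hF U] U Suc.prems, of j UNIV] by simp
    show "((\<lambda>s. (deriv ^^ j) G s) has_field_derivative (deriv ^^ Suc j) G y) (at y)" for j
      using holomorphic_derivI[OF holomorphic_higher_deriv[OF hG U] U Suc.prems, of j UNIV] by simp
  qed
  also have "\<dots> = ev (\<lambda>j. (deriv ^^ j) F y) (\<lambda>j. (deriv ^^ j) G y) z0 z0 ((td ^^ Suc k) e)"
    by (simp add: td_def ev_sb)
  finally show ?case .
qed


lemma nod_defs: "nod eR1" "nod eR2" "nod eu1" "nod eu2"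
  by (simp_all add: eR1_def eR2_def eu1_def eu2_def)

lemma bnd_defs: "bnd 3 eR1" "bnd 3 eR2"
  by (simp_all add: eR1_def eR2_def)

lemma jet_eq: "jet v x t = (\<lambda>j. (deriv ^^ j) (\<lambda>y. v y t) x)"
  by (simp add: jet_def Dx_def fun_eq_iff)

lemma u2_eq: "(\<lambda>x t. Dx 1 v2 x t + Dx 1 v1 x t * v2 x t - exp (- 3 * v1 x t)) =
   (\<lambda>x t. ev (jet v1 x t) (jet v2 x t) z0 z0 eu2)"
  by (simp add: fun_eq_iff eu2_def jet_def Dx_def)

lemma u1_eq: "(\<lambda>x t. Dx 2 v1 x t + (Dx 1 v1 x t)^2 + (ev (jet v1 x t) (jet v2 x t) z0 z0 eu2)^2) =
   (\<lambda>x t. ev (jet v1 x t) (jet v2 x t) z0 z0 eu1)"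
  by (simp add: fun_eq_iff eu1_def power2_eq_square jet_def)

lemma u1_pt: "Dx 2 v1 x t + (Dx 1 v1 x t)^2 + (ev (jet v1 x t) (jet v2 x t) z0 z0 eu2)^2 =
   ev (jet v1 x t) (jet v2 x t) z0 z0 eu1"
  using u1_eq[of v1 v2] by (metis)

lemma u2_pt: "Dx 1 v2 x t + Dx 1 v1 x t * v2 x t - exp (- 3 * v1 x t) = ev (jet v1 x t) (jet v2 x t) z0 z0 eu2"
  using u2_eq[of v2 v1] by metis

lemma main_step:
  assumes a1: "analytic2 S v1" and a2: "analytic2 S v2"
    and ev1': "\<forall>y. (y, t) \<in> S \<longrightarrow> Dt v1 y t = ev (jet v1 y t) (jet v2 y t) z0 z0 eR1"
    and ev2': "\<forall>y. (y, t) \<in> S \<longrightarrow> Dt v2 y t = ev (jet v1 y t) (jet v2 y t) z0 z0 eR2"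
    and xt: "(x, t) \<in> S" and e: "nod e"
  shows "Dx k (\<lambda>x t. ev (jet v1 x t) (jet v2 x t) z0 z0 e) x t = ev (jet v1 x t) (jet v2 x t) z0 z0 ((td ^^ k) e)"
    and "Dt (\<lambda>x t. ev (jet v1 x t) (jet v2 x t) z0 z0 e) x t =
           ev (jet v1 x t) (jet v2 x t) z0 z0 (sb (\<lambda>j. (td ^^ j) eR1) (\<lambda>j. (td ^^ j) eR2) (dv e))"
proof -
  have ev1: "\<And>y. (y, t) \<in> S \<Longrightarrow> Dt v1 y t = ev (jet v1 y t) (jet v2 y t) z0 z0 eR1" using ev1' by blast
  have ev2: "\<And>y. (y, t) \<in> S \<Longrightarrow> Dt v2 y t = ev (jet v1 y t) (jet v2 y t) z0 z0 eR2" using ev2' by blast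
  define U where "U = {y. (y, t) \<in> S}"
  have oS: "open S" using a1 by (simp add: analytic2_def)
  have U: "open U" unfolding U_def by (rule open_slice1[OF oS])
  have xU: "x \<in> U" using xt by (simp add: U_def)
  have hF: "(\<lambda>y. v1 y t) holomorphic_on U" using a1 by (simp add: analytic2_def U_def)
  have hG: "(\<lambda>y. v2 y t) holomorphic_on U" using a2 by (simp add: analytic2_def U_def)
  have tdk: "(deriv ^^ k) (\<lambda>y. ev (jet v1 y t) (jet v2 y t) z0 z0 e') x = ev (jet v1 x t) (jet v2 x t) z0 z0 ((td ^^ k) e')"
    if "nod e'" for e' k
    unfolding jet_eq using ev_td_pow[OF hF hG U that xU] .
  show "Dx k (\<lambda>x t. ev (jet v1 x t) (jet v2 x t) z0 z0 e) x t = ev (jet v1 x t) (jet v2 x t) z0 z0 ((td ^^ k) e)"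
    unfolding Dx_def using tdk[OF e] by simp
  have da: "((\<lambda>s. jet v1 x s j) has_field_derivative ev (jet v1 x t) (jet v2 x t) z0 z0 ((td ^^ j) eR1)) (at t)" for j
  proof -
    have "((\<lambda>s. jet v1 x s j) has_field_derivative (deriv ^^ j) (\<lambda>y. deriv (\<lambda>s. v1 y s) t) x) (at t)"
      unfolding jet_eq by (rule commute[OF a1 xt])
    moreover have "(deriv ^^ j) (\<lambda>y. deriv (\<lambda>s. v1 y s) t) x = (deriv ^^ j) (\<lambda>y. ev (jet v1 y t) (jet v2 y t) z0 z0 eR1) x"
      by (rule higher_deriv_cong_ev[OF eventually_mono[OF eventually_nhds_in_open[OF U xU]]])
         (auto simp: U_def ev1[unfolded Dt_def])
    ultimately show ?thesis using tdk[OF nod_defs(1)] by simp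
  qed
  have db: "((\<lambda>s. jet v2 x s j) has_field_derivative ev (jet v1 x t) (jet v2 x t) z0 z0 ((td ^^ j) eR2)) (at t)" for j
  proof -
    have "((\<lambda>s. jet v2 x s j) has_field_derivative (deriv ^^ j) (\<lambda>y. deriv (\<lambda>s. v2 y s) t) x) (at t)"
      unfolding jet_eq by (rule commute[OF a2 xt])
    moreover have "(deriv ^^ j) (\<lambda>y. deriv (\<lambda>s. v2 y s) t) x = (deriv ^^ j) (\<lambda>y. ev (jet v1 y t) (jet v2 y t) z0 z0 eR2) x"
      by (rule higher_deriv_cong_ev[OF eventually_mono[OF eventually_nhds_in_open[OF U xU]]])
         (auto simp: U_def ev2[unfolded Dt_def])
    ultimately show ?thesis using tdk[OF nod_defs(2)] by simp
  qed
  have "((\<lambda>s. ev (jet v1 x s) (jet v2 x s) z0 z0 e) has_field_derivative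
          ev (jet v1 x t) (jet v2 x t) (\<lambda>j. ev (jet v1 x t) (jet v2 x t) z0 z0 ((td ^^ j) eR1))
             (\<lambda>j. ev (jet v1 x t) (jet v2 x t) z0 z0 ((td ^^ j) eR2)) (dv e)) (at t)"
    by (rule ev_dv_deriv[OF e da db])
  then show "Dt (\<lambda>x t. ev (jet v1 x t) (jet v2 x t) z0 z0 e) x t =
           ev (jet v1 x t) (jet v2 x t) z0 z0 (sb (\<lambda>j. (td ^^ j) eR1) (\<lambda>j. (td ^^ j) eR2) (dv e))"
    unfolding Dt_def ev_sb by (rule DERIV_imp_deriv)
qed

lemma jetR1: "jet_function 3 (\<lambda>a b. ev a b z0 z0 eR1)" by (rule jet_fun_ev[OF nod_defs(1) bnd_defs(1)])
lemma jetR2: "jet_function 3 (\<lambda>a b. ev a b z0 z0 eR2)" by (rule jet_fun_ev[OF nod_defs(2) bnd_defs(2)])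

theorem mainTheorem10:
  shows "\<exists>N R1 R2. jet_function N R1 \<and> jet_function N R2 \<and>
    (\<forall>S v1 v2. analytic2 S v1 \<and> analytic2 S v2 \<and>
       (\<forall>x t. (x, t) \<in> S \<longrightarrow>
          Dt v1 x t = R1 (jet v1 x t) (jet v2 x t) \<and>
          Dt v2 x t = R2 (jet v1 x t) (jet v2 x t)) \<longrightarrow>
     (let u2 = (\<lambda>x t. Dx 1 v2 x t + Dx 1 v1 x t * v2 x t - exp (- 3 * v1 x t));
          u1 = (\<lambda>x t. Dx 2 v1 x t + (Dx 1 v1 x t)^2 + (u2 x t)^2)
      in \<forall>x t. (x, t) \<in> S \<longrightarrow>
          Dt u1 x t = - Dx 3 u1 x t + 6 * u1 x t * Dx 1 u1 x t
              - 3 * u2 x t * Dx 3 u2 x t - 3 * Dx 1 u2 x t * Dx 2 u2 x t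
              + 3 * Dx 1 u1 x t * (u2 x t)^2 + 6 * u1 x t * u2 x t * Dx 1 u2 x t \<and>
          Dt u2 x t = - Dx 3 u2 x t + 3 * (u2 x t)^2 * Dx 1 u2 x t
              + 3 * u1 x t * Dx 1 u2 x t + 3 * Dx 1 u1 x t * u2 x t))"
proof (rule exI[where x="3::nat"], rule exI[where x="\<lambda>a b. ev a b z0 z0 eR1"], rule exI[where x="\<lambda>a b. ev a b z0 z0 eR2"],
       rule conjI[OF jetR1 conjI[OF jetR2]], intro allI impI)
  fix S v1 v2
  assume H: "analytic2 S v1 \<and> analytic2 S v2 \<and>
       (\<forall>x t. (x, t) \<in> S \<longrightarrow>
          Dt v1 x t = ev (jet v1 x t) (jet v2 x t) z0 z0 eR1 \<and>
          Dt v2 x t = ev (jet v1 x t) (jet v2 x t) z0 z0 eR2)"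
  then have a1: "analytic2 S v1" and a2: "analytic2 S v2"
    and ev1: "\<And>y t. (y, t) \<in> S \<Longrightarrow> Dt v1 y t = ev (jet v1 y t) (jet v2 y t) z0 z0 eR1"
    and ev2: "\<And>y t. (y, t) \<in> S \<Longrightarrow> Dt v2 y t = ev (jet v1 y t) (jet v2 y t) z0 z0 eR2"
    by auto
  show "let u2 = (\<lambda>x t. Dx 1 v2 x t + Dx 1 v1 x t * v2 x t - exp (- 3 * v1 x t));
          u1 = (\<lambda>x t. Dx 2 v1 x t + (Dx 1 v1 x t)^2 + (u2 x t)^2)
      in \<forall>x t. (x, t) \<in> S \<longrightarrow>
          Dt u1 x t = - Dx 3 u1 x t + 6 * u1 x t * Dx 1 u1 x t
              - 3 * u2 x t * Dx 3 u2 x t - 3 * Dx 1 u2 x t * Dx 2 u2 x t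
              + 3 * Dx 1 u1 x t * (u2 x t)^2 + 6 * u1 x t * u2 x t * Dx 1 u2 x t \<and>
          Dt u2 x t = - Dx 3 u2 x t + 3 * (u2 x t)^2 * Dx 1 u2 x t
              + 3 * u1 x t * Dx 1 u2 x t + 3 * Dx 1 u1 x t * u2 x t"
    unfolding Let_def u2_eq u1_eq
    apply (intro allI impI)
    subgoal for x t
    proof -
      assume xt: "(x, t) \<in> S"
      have E1: "\<forall>y. (y, t) \<in> S \<longrightarrow> Dt v1 y t = ev (jet v1 y t) (jet v2 y t) z0 z0 eR1" using ev1 by blast
      have E2: "\<forall>y. (y, t) \<in> S \<longrightarrow> Dt v2 y t = ev (jet v1 y t) (jet v2 y t) z0 z0 eR2" using ev2 by blast
      note ms = main_step[OF a1 a2 E1 E2 xt]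
      note s1 = ms[OF nod_defs(3)] and s2 = ms[OF nod_defs(4)]
      show ?thesis
        unfolding s1 s2 u1_pt u2_pt using final1 final2 by simp
    qed
    done
qed

end
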